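(* Let $\mathrm{S}$ be a semicopula such that for each $a\in(0,1)$ the interval $[0,1]$ is the union of countably many closed intervals on each of which the function $x\mapsto\mathrm{S}(a,x)$ is either constant or strictly increasing. Then the following are equivalent: (i) for every measurable space $(X,\mathcal{A})$, every capacity $\mu$ on $\mathcal{A}$, every $\mathcal{A}$-measurable $f\colon X\to[0,1]$ and every $a\in[0,1]$, $$\mathbf{I}_{\mathrm{S}}\big(\mu,\mathrm{S}(a,f)\big)=\mathrm{S}\big(a,\mathbf{I}_{\mathrm{S}}(\mu,f)\big),$$ where $\mathrm{S}(a,f)$ denotes the function $x\mapsto\mathrm{S}(a,f(x))$; (ii) $\mathrm{S}$ is associative (i.e. $\mathrm{S}(\mathrm{S}(x,y),z)=\mathrm{S}(x,\mathrm{S}(y,z))$ for all $x,y,z\in[0,1]$) and for each $a\in(0,1)$ the function $[0,1]\ni x\mapsto\mathrm{S}(a,x)$ is continuous.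
   Context: A semicopula is a function $\mathrm{S}\colon[0,1]^2\to[0,1]$ that is non-decreasing in each coordinate and has neutral element $1$, i.e. $\mathrm{S}(x,1)=\mathrm{S}(1,x)=x$ for all $x\in[0,1]$. For a measurable space $(X,\mathcal{A})$ (with $X$ nonempty and $\mathcal{A}$ a $\sigma$-algebra), a capacity on $\mathcal{A}$ is a non-decreasing set function $\mu\colon\mathcal{A}\to[0,1]$ with $\mu(\emptyset)=0$ and $\mu(X)=1$. For a capacity $\mu$ and an $\mathcal{A}$-measurable $f\colon X\to[0,1]$, the generalized Sugeno integral is $$\mathbf{I}_{\mathrm{S}}(\mu,f)=\sup_{t\in[0,1]}\mathrm{S}\big(t,\mu(\{x\in X: f(x)\ge t\})\big).$$ *)

theory Defs
  imports "HOL-Analysis.Analysis"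
begin

definition semicopula :: "(real \<Rightarrow> real \<Rightarrow> real) \<Rightarrow> bool" where
  "semicopula S \<longleftrightarrow>
     (\<forall>x\<in>{0..1}. \<forall>y\<in>{0..1}. S x y \<in> {0..1}) \<and>
     (\<forall>x\<in>{0..1}. \<forall>x'\<in>{0..1}. \<forall>y\<in>{0..1}. x \<le> x' \<longrightarrow> S x y \<le> S x' y) \<and>
     (\<forall>x\<in>{0..1}. \<forall>y\<in>{0..1}. \<forall>y'\<in>{0..1}. y \<le> y' \<longrightarrow> S x y \<le> S x y') \<and>
     (\<forall>x\<in>{0..1}. S x 1 = x \<and> S 1 x = x)"

definition capacity :: "'a measure \<Rightarrow> ('a set \<Rightarrow> real) \<Rightarrow> bool" where
  "capacity M \<mu> \<longleftrightarrow>
     (\<forall>A\<in>sets M. \<forall>B\<in>sets M. A \<subseteq> B \<longrightarrow> \<mu> A \<le> \<mu> B) \<and>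
     (\<forall>A\<in>sets M. \<mu> A \<in> {0..1}) \<and>
     \<mu> {} = 0 \<and> \<mu> (space M) = 1"

definition sugeno :: "(real \<Rightarrow> real \<Rightarrow> real) \<Rightarrow> 'a measure \<Rightarrow> ('a set \<Rightarrow> real) \<Rightarrow> ('a \<Rightarrow> real) \<Rightarrow> real" where
  "sugeno S M \<mu> f = (SUP t\<in>{0..1}. S t (\<mu> {x\<in>space M. f x \<ge> t}))"

text \<open>Property (i) restricted to a single measurable space M.\<close>
definition sugeno_homogeneous_on :: "(real \<Rightarrow> real \<Rightarrow> real) \<Rightarrow> 'a measure \<Rightarrow> bool" where
  "sugeno_homogeneous_on S M \<longleftrightarrow>
     (\<forall>\<mu> f a. capacity M \<mu> \<and> f \<in> borel_measurable M \<and> (\<forall>x\<in>space M. f x \<in> {0..1}) \<and> a \<in> {0..1}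
        \<longrightarrow> sugeno S M \<mu> (\<lambda>x. S a (f x)) = S a (sugeno S M \<mu> f))"

definition piecewise_const_or_strict :: "(real \<Rightarrow> real) \<Rightarrow> bool" where
  "piecewise_const_or_strict g \<longleftrightarrow>
     (\<exists>l u :: nat \<Rightarrow> real.
        (\<forall>n. 0 \<le> l n \<and> l n \<le> u n \<and> u n \<le> 1) \<and>
        (\<Union>n. {l n..u n}) = {0..1} \<and>
        (\<forall>n. (\<forall>x\<in>{l n..u n}. \<forall>y\<in>{l n..u n}. g x = g y) \<or> strict_mono_on {l n..u n} g))"

end

theory Submission
  imports Defs
begin


lemma sc_range: "semicopula S \<Longrightarrow> x \<in> {0..1} \<Longrightarrow> y \<in> {0..1} \<Longrightarrow> 0 \<le> S x y \<and> S x y \<le> 1"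
  unfolding semicopula_def by auto
lemma sc_mono1: "semicopula S \<Longrightarrow> x \<in> {0..1} \<Longrightarrow> x' \<in> {0..1} \<Longrightarrow> y \<in> {0..1} \<Longrightarrow> x \<le> x' \<Longrightarrow> S x y \<le> S x' y"
  unfolding semicopula_def by auto
lemma sc_mono2: "semicopula S \<Longrightarrow> x \<in> {0..1} \<Longrightarrow> y \<in> {0..1} \<Longrightarrow> y' \<in> {0..1} \<Longrightarrow> y \<le> y' \<Longrightarrow> S x y \<le> S x y'"
  unfolding semicopula_def by auto
lemma sc_one1: "semicopula S \<Longrightarrow> x \<in> {0..1} \<Longrightarrow> S x 1 = x"
  unfolding semicopula_def by auto
lemma sc_one2: "semicopula S \<Longrightarrow> x \<in> {0..1} \<Longrightarrow> S 1 x = x"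
  unfolding semicopula_def by auto
lemma sc_zero1: "semicopula S \<Longrightarrow> y \<in> {0..1} \<Longrightarrow> S 0 y = 0"
proof -
  assume s: "semicopula S" and y: "y \<in> {0..1}"
  have "S 0 y \<le> S 0 1" using sc_mono2[OF s, of 0 y 1] y by auto
  moreover have "S 0 1 = 0" using sc_one1[OF s, of 0] by auto
  moreover have "0 \<le> S 0 y" using sc_range[OF s, of 0 y] y by auto
  ultimately show ?thesis by auto
qed
lemma sc_zero2: "semicopula S \<Longrightarrow> y \<in> {0..1} \<Longrightarrow> S y 0 = 0"
proof -
  assume s: "semicopula S" and y: "y \<in> {0..1}"
  have "S y 0 \<le> S 1 0" using sc_mono1[OF s, of y 1 0] y by auto
  moreover have "S 1 0 = 0" using sc_one2[OF s, of 0] by auto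
  moreover have "0 \<le> S y 0" using sc_range[OF s, of y 0] y by auto
  ultimately show ?thesis by auto
qed

lemma sup01_le: fixes F :: "real \<Rightarrow> real"
  assumes "\<And>t. t \<in> {0..1} \<Longrightarrow> F t \<le> c" shows "(SUP t\<in>{0..1}. F t) \<le> c"
  by (rule cSUP_least) (use assms in auto)

lemma le_sup01: fixes F :: "real \<Rightarrow> real"
  assumes "\<And>t. t \<in> {0..1} \<Longrightarrow> F t \<le> B" "t \<in> {0..1}" shows "F t \<le> (SUP t\<in>{0..1}. F t)"
  by (rule cSUP_upper) (use assms in \<open>auto intro!: bdd_aboveI2[where M=B]\<close>)

lemma cap_range: "capacity M \<mu> \<Longrightarrow> A \<in> sets M \<Longrightarrow> \<mu> A \<in> {0..1}"
  unfolding capacity_def by auto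
lemma cap_mono: "capacity M \<mu> \<Longrightarrow> A \<in> sets M \<Longrightarrow> B \<in> sets M \<Longrightarrow> A \<subseteq> B \<Longrightarrow> \<mu> A \<le> \<mu> B"
  unfolding capacity_def by auto

lemma mono_cont:
  fixes g :: "real \<Rightarrow> real"
  assumes mono: "\<And>x y. x \<in> {0..1} \<Longrightarrow> y \<in> {0..1} \<Longrightarrow> x \<le> y \<Longrightarrow> g x \<le> g y"
    and g0: "g 0 = 0" and a: "g 1 = a" and surj: "\<And>s. 0 < s \<Longrightarrow> s \<le> a \<Longrightarrow> \<exists>x\<in>{0..1}. g x = s"
  shows "continuous_on {0..1} g"
proof -
  define G where "G x = (if x < 0 then x else if x > 1 then a + (x - 1) else g x)" for x
  have a0: "0 \<le> a" using mono[of 0 1] g0 a by auto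
  have "continuous_on UNIV G"
  proof (rule continuous_onI_mono)
    have "G ` UNIV = UNIV"
    proof safe
      fix y :: real
      show "y \<in> range G"
      proof (cases "y < 0")
        case True then show ?thesis by (intro image_eqI[of _ _ y]) (auto simp: G_def)
      next
        case f1: False
        show ?thesis
        proof (cases "y > a")
          case True then show ?thesis
            using a0 by (intro image_eqI[of _ _ "y - a + 1"]) (auto simp: G_def)
        next
          case False
          show ?thesis
          proof (cases "y = 0")
            case True then show ?thesis using g0 by (intro image_eqI[of _ _ 0]) (auto simp: G_def)
          next
            case False
            then obtain x where "x \<in> {0..1}" "g x = y" using surj[of y] f1 \<open>\<not> y > a\<close> by auto
            then show ?thesis by (intro image_eqI[of _ _ x]) (auto simp: G_def)
          qed
        qed
      qed
    qed auto
    then show "open (G ` UNIV)" by simp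
  next
    fix x y :: real assume "x \<le> y"
    have r: "z \<in> {0..1} \<Longrightarrow> 0 \<le> g z \<and> g z \<le> a" for z
      using mono[of 0 z] mono[of z 1] g0 a by auto
    show "G x \<le> G y"
      using \<open>x \<le> y\<close> r[of x] r[of y] mono[of x y] a0 by (auto simp: G_def)
  qed
  then have "continuous_on {0..1} G" by (rule continuous_on_subset) auto
  then show ?thesis by (rule continuous_on_cong[THEN iffD1, rotated 2]) (auto simp: G_def)
qed



lemma sug_twopt:
  assumes s: "semicopula S" and d: "d \<in> {0..1}" and b: "b \<in> {0..1}"
  shows "sugeno S (count_space UNIV) (\<lambda>B. if B = UNIV then 1 else if (1::real) \<in> B then b else 0)
           (\<lambda>x. if x = 1 then d else 0) = S d b"
proof -
  let ?F = "\<lambda>t. S t ((\<lambda>B. if B = UNIV then 1 else if (1::real) \<in> B then b else 0) {x \<in> space (count_space UNIV). t \<le> (if x = 1 then d else 0)})"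
  have F: "?F t = (if t \<le> 0 then S t 1 else if t \<le> d then S t b else S t 0)" if "t \<in> {0..1}" for t
  proof -
    have "t \<le> 0 \<Longrightarrow> {x \<in> space (count_space UNIV). t \<le> (if x = 1 then d else 0)} = UNIV"
      using d by auto
    moreover have "\<not> t \<le> 0 \<Longrightarrow> t \<le> d \<Longrightarrow> {x \<in> space (count_space UNIV). t \<le> (if x = 1 then d else 0)} = {1}"
      by auto
    moreover have "\<not> t \<le> 0 \<Longrightarrow> \<not> t \<le> d \<Longrightarrow> {x \<in> space (count_space UNIV). t \<le> (if x = 1 then d else 0)} = {}"
      by auto
    moreover have "{1::real} \<noteq> UNIV" "{} \<noteq> (UNIV::real set)"
      by (metis UNIV_I singletonD zero_neq_one) auto
    ultimately show ?thesis using d by (cases "t \<le> 0"; cases "t \<le> d") auto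
  qed
  have Fb: "?F t \<le> S d b" if t: "t \<in> {0..1}" for t
  proof -
    have "0 \<le> S d b" using sc_range[OF s d b] by auto
    moreover have "t \<le> 0 \<Longrightarrow> S t 1 = 0" using t sc_one1[OF s t] by auto
    moreover have "t \<le> d \<Longrightarrow> S t b \<le> S d b" using sc_mono1[OF s t d b] by auto
    moreover have "S t 0 = 0" using sc_zero2[OF s t] .
    ultimately show ?thesis using F[OF t] by auto
  qed
  have "S d b \<le> (SUP t\<in>{0..1}. ?F t)"
  proof (cases "d = 0")
    case True
    have "S d b = ?F 0" using F[of 0] True sc_zero1[OF s, of 1] sc_zero1[OF s b] by auto
    then show ?thesis using le_sup01[of ?F "S d b" 0] Fb by auto
  next
    case False
    have "S d b = ?F d" using F[of d] d False by auto
    then show ?thesis using le_sup01[of ?F "S d b" d] Fb d by auto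
  qed
  moreover have "(SUP t\<in>{0..1}. ?F t) \<le> S d b" using sup01_le[of ?F] Fb by auto
  ultimately show ?thesis unfolding sugeno_def by linarith
qed

lemma hom_assoc:
  assumes s: "semicopula S" and h: "sugeno_homogeneous_on S (count_space (UNIV::real set))"
    and x: "x \<in> {0..1}" and y: "y \<in> {0..1}" and z: "z \<in> {0..1}"
  shows "S (S x y) z = S x (S y z)"
proof -
  let ?\<mu> = "\<lambda>B. if B = UNIV then 1 else if (1::real) \<in> B then z else 0"
  have cap: "capacity (count_space UNIV) ?\<mu>"
    unfolding capacity_def
  proof (intro conjI ballI impI)
    fix A B :: "real set" assume "A \<subseteq> B"
    then show "?\<mu> A \<le> ?\<mu> B" using z by (cases "B = UNIV"; cases "A = UNIV"; cases "1 \<in> A"; auto)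
  next
    fix A :: "real set" show "?\<mu> A \<in> {0..1}" using z by auto
  qed auto
  have eq: "sugeno S (count_space UNIV) ?\<mu> (\<lambda>w. S x ((\<lambda>w. if w = 1 then y else 0) w))
     = S x (sugeno S (count_space UNIV) ?\<mu> (\<lambda>w. if w = 1 then y else 0))"
    using h cap x y unfolding sugeno_homogeneous_on_def by auto
  have fe: "(\<lambda>w. S x ((\<lambda>w. if w = 1 then y else 0) w)) = (\<lambda>w. if w = 1 then S x y else 0)"
    using sc_zero2[OF s x] by auto
  have "S x y \<in> {0..1}" using sc_range[OF s x y] by auto
  then have e1: "sugeno S (count_space UNIV) ?\<mu> (\<lambda>w. if w = 1 then S x y else 0) = S (S x y) z"
    using sug_twopt[OF s _ z] by blast
  have e2: "sugeno S (count_space UNIV) ?\<mu> (\<lambda>w. if w = 1 then y else 0) = S y z"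
    using sug_twopt[OF s y z] by blast
  show ?thesis using eq[unfolded fe e1 e2] .
qed



lemma hom_surj:
  assumes s: "semicopula S" and h: "sugeno_homogeneous_on S (count_space ({0..1}::real set))"
    and a: "a \<in> {0..1}" and sp: "0 < r" "r \<le> S a 1"
  shows "\<exists>x\<in>{0..1}. S a x = r"
proof -
  let ?g = "S a"
  let ?M = "count_space ({0..1}::real set)"
  have gm: "x \<in> {0..1} \<Longrightarrow> y \<in> {0..1} \<Longrightarrow> x \<le> y \<Longrightarrow> ?g x \<le> ?g y" for x y
    using sc_mono2[OF s a] by auto
  have g0: "?g 0 = 0" using sc_zero2[OF s a] .
  have gr: "x \<in> {0..1} \<Longrightarrow> 0 \<le> ?g x \<and> ?g x \<le> 1" for x using sc_range[OF s a] by auto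
  define C where "C = {x\<in>{0..1}. ?g x < r}"
  define c where "c = Sup C"
  have C0: "0 \<in> C" using g0 sp unfolding C_def by auto
  have Cb: "bdd_above C" unfolding C_def by (auto intro!: bdd_aboveI2[where M=1])
  have c0: "0 \<le> c" unfolding c_def using cSup_upper[OF C0 Cb] .
  have c1: "c \<le> 1" unfolding c_def 
  proof (rule cSup_least)
    show "C \<noteq> {}" using C0 by blast
  next
    fix x assume "x \<in> C" then show "x \<le> 1" by (simp add: C_def)
  qed
  have c01: "c \<in> {0..1}" using c0 c1 by auto
  have P1: "?g x < r" if xx: "x \<in> {0..1}" "x < c" for x
  proof -
    have "\<exists>y\<in>C. x < y" using less_cSup_iff[OF _ Cb, of x] C0 xx unfolding c_def by blast
    then obtain y where "y \<in> C" "x < y" by blast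
    then show ?thesis using gm[of x y] that unfolding C_def by auto
  qed
  have P2: "r \<le> ?g x" if "x \<in> {0..1}" "c < x" for x
  proof (rule ccontr)
    assume "\<not> r \<le> ?g x"
    then have "x \<in> C" using that unfolding C_def by auto
    then show False using cSup_upper[OF _ Cb, of x] that unfolding c_def by auto
  qed
  have fm: "(\<lambda>x. x) \<in> borel_measurable ?M" by simp
  show ?thesis
  proof (cases "?g c = r")
    case True then show ?thesis using c01 by auto
  next
    case ne: False
    show ?thesis
    proof (cases "?g c > r")
      case True
      have cpos: "0 < c" using True g0 sp c01 by (cases "c = 0") auto
      define \<mu> where "\<mu> B = (if \<exists>t<c. \<forall>x\<in>{0..1}. t \<le> x \<longrightarrow> x \<in> B then 1 else (0::real))" for B :: "real set"
      have mu_lvl: "\<mu> {x\<in>space ?M. t \<le> x} = (if t < c then 1 else 0)" if t: "t \<in> {0..1}" for t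
      proof (cases "t < c")
        case True then show ?thesis unfolding \<mu>_def by auto
      next
        case False
        have "\<not> (\<exists>t'<c. \<forall>x\<in>{0..1}. t' \<le> x \<longrightarrow> x \<in> {x\<in>space ?M. t \<le> x})"
        proof
          assume "\<exists>t'<c. \<forall>x\<in>{0..1}. t' \<le> x \<longrightarrow> x \<in> {x\<in>space ?M. t \<le> x}"
          then obtain t' where "t' < c" "\<forall>x\<in>{0..1}. t' \<le> x \<longrightarrow> x \<in> {x\<in>space ?M. t \<le> x}" by auto
          then have "t \<le> max t' 0" using c01 by (auto simp: max_def split: if_splits)
          then show False using False \<open>t' < c\<close> cpos by (auto simp: max_def split: if_splits)
        qed
        then show ?thesis using False unfolding \<mu>_def by auto
      qed
      have cap: "capacity ?M \<mu>"
        unfolding capacity_def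
      proof (intro conjI ballI impI)
        fix A B :: "real set" assume AB: "A \<subseteq> B"
        show "\<mu> A \<le> \<mu> B"
        proof (cases "\<mu> A = 0")
          case True then show ?thesis unfolding \<mu>_def by simp
        next
          case False
          then have "\<mu> B = 1" using AB unfolding \<mu>_def by (simp split: if_splits) blast
          then show ?thesis unfolding \<mu>_def by simp
        qed
      next
        fix A :: "real set" show "\<mu> A \<in> {0..1}" unfolding \<mu>_def by auto
      next
        show "\<mu> {} = 0" unfolding \<mu>_def
        proof (rule if_not_P, rule notI)
          assume "\<exists>t<c. \<forall>x\<in>{0..1}. t \<le> x \<longrightarrow> x \<in> {}"
          then obtain t where tt: "t < c" "\<forall>x\<in>{0..1}. t \<le> x \<longrightarrow> x \<in> {}" by auto
          have "max t 0 \<in> {0..1}" "t \<le> max t 0" using tt(1) c01 by auto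
          then show False using tt(2) by blast
        qed
      next
        show "\<mu> (space ?M) = 1" unfolding \<mu>_def using cpos by auto
      qed
      have eq: "sugeno S ?M \<mu> (\<lambda>x. S a x) = S a (sugeno S ?M \<mu> (\<lambda>x. x))"
        using h cap a unfolding sugeno_homogeneous_on_def by auto
      have I: "sugeno S ?M \<mu> (\<lambda>x. x) = c"
      proof -
        let ?F = "\<lambda>t. S t (\<mu> {x\<in>space ?M. t \<le> x})"
        have F: "?F t = (if t < c then t else 0)" if "t \<in> {0..1}" for t
          using mu_lvl[OF that] sc_one1[OF s that] sc_zero2[OF s that] by auto
        have Fb: "?F t \<le> c" if "t \<in> {0..1}" for t using F[OF that] c01 by auto
        have up: "?F t \<le> (SUP t\<in>{0..1}. ?F t)" if "t \<in> {0..1}" for t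
          using le_sup01[of ?F c t] Fb that by auto
        have "(SUP t\<in>{0..1}. ?F t) \<le> c" using sup01_le[of ?F c] Fb by auto
        moreover have "c \<le> (SUP t\<in>{0..1}. ?F t)"
        proof (rule ccontr)
          assume "\<not> ?thesis"
          define L where "L = (SUP t\<in>{0..1}. ?F t)"
          have L0: "0 \<le> L" using up[of 0] F[of 0] cpos unfolding L_def by auto
          have "(L + c)/2 \<in> {0..1}" "(L + c)/2 < c" using L0 c01 \<open>\<not> c \<le> _\<close> unfolding L_def by auto
          then show False using up[of "(L+c)/2"] F[of "(L+c)/2"] \<open>\<not> c \<le> _\<close> unfolding L_def by auto
        qed
        ultimately show ?thesis unfolding sugeno_def by linarith
      qed
      have "sugeno S ?M \<mu> (\<lambda>x. S a x) \<le> r"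
        unfolding sugeno_def
      proof (rule sup01_le)
        fix t :: real assume t: "t \<in> {0..1}"
        show "S t (\<mu> {x \<in> space ?M. t \<le> S a x}) \<le> r"
        proof (cases "\<exists>t'<c. \<forall>x\<in>{0..1}. t' \<le> x \<longrightarrow> x \<in> {x \<in> space ?M. t \<le> S a x}")
          case True
          then obtain t' where t': "t' < c" "\<forall>x\<in>{0..1}. t' \<le> x \<longrightarrow> x \<in> {x \<in> space ?M. t \<le> S a x}" by auto
          have m: "max t' 0 \<in> {0..1}" "max t' 0 < c" using t' c01 cpos by auto
          then have "t \<le> S a (max t' 0)" using t' by auto
          moreover have "S a (max t' 0) < r" using P1[OF m] .
          ultimately show ?thesis using True sc_one1[OF s t] unfolding \<mu>_def by auto
        next
          case False
          then show ?thesis using sc_zero2[OF s t] sp unfolding \<mu>_def by auto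
        qed
      qed
      then show ?thesis using eq I True by auto
    next
      case False
      then have lt: "?g c < r" using ne by auto
      have c1: "c < 1" using lt sp c01 by (cases "c = 1") auto
      define \<mu> where "\<mu> B = (if \<exists>e>c. \<forall>x. c < x \<and> x < e \<longrightarrow> x \<in> B then 1 else (0::real))" for B :: "real set"
      have mu_lvl: "\<mu> {x\<in>space ?M. t \<le> x} = (if t \<le> c then 1 else 0)" if t: "t \<in> {0..1}" for t
      proof (cases "t \<le> c")
        case True
        have "\<forall>x. c < x \<and> x < 1 \<longrightarrow> x \<in> {x\<in>space ?M. t \<le> x}" using True c01 by auto
        then show ?thesis using True c1 unfolding \<mu>_def by auto
      next
        case False
        have "\<not> (\<exists>e>c. \<forall>x. c < x \<and> x < e \<longrightarrow> x \<in> {x\<in>space ?M. t \<le> x})"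
        proof
          assume "\<exists>e>c. \<forall>x. c < x \<and> x < e \<longrightarrow> x \<in> {x\<in>space ?M. t \<le> x}"
          then obtain e where e: "e > c" "\<forall>x. c < x \<and> x < e \<longrightarrow> x \<in> {x\<in>space ?M. t \<le> x}" by auto
          have "c < (c + min e t)/2" "(c + min e t)/2 < e" using e False by auto
          then have "t \<le> (c + min e t)/2" using e(2)[rule_format, of "(c + min e t)/2"] by auto
          then show False using False e by auto
        qed
        then show ?thesis using False unfolding \<mu>_def by auto
      qed
      have cap: "capacity ?M \<mu>"
        unfolding capacity_def
      proof (intro conjI ballI impI)
        fix A B :: "real set" assume AB: "A \<subseteq> B"
        show "\<mu> A \<le> \<mu> B"
        proof (cases "\<mu> A = 0")
          case True then show ?thesis unfolding \<mu>_def by simp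
        next
          case False
          then have "\<mu> B = 1" using AB unfolding \<mu>_def by (simp split: if_splits) blast
          then show ?thesis unfolding \<mu>_def by simp
        qed
      next
        fix A :: "real set" show "\<mu> A \<in> {0..1}" unfolding \<mu>_def by auto
      next
        show "\<mu> {} = 0" unfolding \<mu>_def
        proof (rule if_not_P, rule notI)
          assume "\<exists>e>c. \<forall>x. c < x \<and> x < e \<longrightarrow> x \<in> {}"
          then obtain e where ee: "e > c" "\<forall>x. c < x \<and> x < e \<longrightarrow> x \<in> {}" by auto
          have "c < (c+e)/2" "(c+e)/2 < e" using ee(1) by auto
          then show False using ee(2) by blast
        qed
      next
        have "\<forall>x. c < x \<and> x < 1 \<longrightarrow> x \<in> space ?M" using c01 by auto
        then show "\<mu> (space ?M) = 1" unfolding \<mu>_def using c1 by auto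
      qed
      have eq: "sugeno S ?M \<mu> (\<lambda>x. S a x) = S a (sugeno S ?M \<mu> (\<lambda>x. x))"
        using h cap a unfolding sugeno_homogeneous_on_def by auto
      have I: "sugeno S ?M \<mu> (\<lambda>x. x) = c"
      proof -
        let ?F = "\<lambda>t. S t (\<mu> {x\<in>space ?M. t \<le> x})"
        have F: "?F t = (if t \<le> c then t else 0)" if "t \<in> {0..1}" for t
          using mu_lvl[OF that] sc_one1[OF s that] sc_zero2[OF s that] by auto
        have Fb: "?F t \<le> c" if "t \<in> {0..1}" for t using F[OF that] c01 by auto
        have "c \<le> (SUP t\<in>{0..1}. ?F t)"
          using le_sup01[of ?F c c] Fb c01 F[of c] by auto
        moreover have "(SUP t\<in>{0..1}. ?F t) \<le> c" using sup01_le[of ?F c] Fb by auto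
        ultimately show ?thesis unfolding sugeno_def by linarith
      qed
      have "r \<le> sugeno S ?M \<mu> (\<lambda>x. S a x)"
      proof -
        let ?F = "\<lambda>t. S t (\<mu> {x\<in>space ?M. t \<le> S a x})"
        have r01: "r \<in> {0..1}" using sp gr[of 1] by auto
        have Fb: "?F t \<le> 1" if "t \<in> {0..1}" for t
        proof -
          have mr: "\<mu> B \<in> {0..1}" for B unfolding \<mu>_def by auto
          show ?thesis using sc_range[OF s that mr] by auto
        qed
        have "\<forall>x. c < x \<and> x < 1 \<longrightarrow> x \<in> {x\<in>space ?M. r \<le> S a x}" using P2 c01 by auto
        then have "?F r = r" using c1 sc_one1[OF s r01] unfolding \<mu>_def by auto
        then show ?thesis using le_sup01[of ?F 1 r] Fb r01 unfolding sugeno_def by auto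
      qed
      then show ?thesis using eq I lt by auto
    qed
  qed
qed



lemma lvl:
  fixes g :: "real \<Rightarrow> real"
  assumes cont: "continuous_on {0..1} g"
    and mono: "\<And>x y. x \<in> {0..1} \<Longrightarrow> y \<in> {0..1} \<Longrightarrow> x \<le> y \<Longrightarrow> g x \<le> g y"
    and g0: "g 0 = 0" and sp: "0 < s" "s \<le> g 1"
  shows "\<exists>t1\<in>{0..1}. g t1 = s \<and> (\<forall>x\<in>{0..1}. s \<le> g x \<longleftrightarrow> t1 \<le> x)"
proof -
  obtain t0 where t0: "0 \<le> t0" "t0 \<le> 1" "g t0 = s"
    using IVT'[of g 0 s 1] cont g0 sp by auto
  define T where "T = {0..1} \<inter> g -` {s..}"
  have cl: "closed T" unfolding T_def by (rule continuous_closed_preimage[OF cont]) auto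
  have Tne: "t0 \<in> T" using t0 unfolding T_def by auto
  have Tb: "bdd_below T" unfolding T_def by (auto intro!: bdd_belowI2[where m=0])
  define t1 where "t1 = Inf T"
  have t1T: "t1 \<in> T" unfolding t1_def using closed_contains_Inf[OF _ Tb cl] Tne by blast
  have t1le: "t1 \<le> t0" unfolding t1_def using cInf_lower[OF Tne Tb] .
  have t101: "t1 \<in> {0..1}" using t1T unfolding T_def by auto
  have "g t1 \<le> s" using mono[OF t101 _ t1le] t0 by auto
  moreover have "s \<le> g t1" using t1T unfolding T_def by auto
  moreover have "s \<le> g x \<longleftrightarrow> t1 \<le> x" if x: "x \<in> {0..1}" for x
  proof
    assume "s \<le> g x" then have "x \<in> T" using x unfolding T_def by auto
    then show "t1 \<le> x" unfolding t1_def using cInf_lower[OF _ Tb] by blast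
  next
    assume "t1 \<le> x" then show "s \<le> g x" using mono[OF t101 x] \<open>s \<le> g t1\<close> by auto
  qed
  ultimately show ?thesis using t101 by (intro bexI[of _ t1]) auto
qed

lemma hom_general:
  fixes M :: "'a measure" and S :: "real \<Rightarrow> real \<Rightarrow> real"
  assumes s: "semicopula S"
    and assoc: "\<forall>x\<in>{0..1}. \<forall>y\<in>{0..1}. \<forall>z\<in>{0..1}. S (S x y) z = S x (S y z)"
    and contS: "\<forall>a\<in>{0<..<1}. continuous_on {0..1} (S a)"
  shows "sugeno_homogeneous_on S M"
  unfolding sugeno_homogeneous_on_def
proof (intro allI impI, elim conjE)
  fix \<mu> :: "'a set \<Rightarrow> real" and f :: "'a \<Rightarrow> real" and a :: real
  assume cap: "capacity M \<mu>" and fm: "f \<in> borel_measurable M" and fr: "\<forall>x\<in>space M. f x \<in> {0..1}"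
    and a: "a \<in> {0..1}"
  let ?g = "S a"
  have cont: "continuous_on {0..1} ?g"
  proof -
    consider "a = 0" | "a = 1" | "a \<in> {0<..<1}" using a by fastforce
    then show ?thesis
    proof cases
      case 1
      have "continuous_on {0..1} (\<lambda>x::real. 0::real)" by simp
      then show ?thesis by (rule continuous_on_cong[THEN iffD1, rotated 2]) (use 1 sc_zero1[OF s] in auto)
    next
      case 2
      have "continuous_on {0..1} (\<lambda>x::real. x)" by simp
      then show ?thesis by (rule continuous_on_cong[THEN iffD1, rotated 2]) (use 2 sc_one2[OF s] in auto)
    qed (use contS in auto)
  qed
  have gm: "x \<in> {0..1} \<Longrightarrow> y \<in> {0..1} \<Longrightarrow> x \<le> y \<Longrightarrow> ?g x \<le> ?g y" for x y
    using sc_mono2[OF s a] by auto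
  have g0: "?g 0 = 0" using sc_zero2[OF s a] .
  have g1: "?g 1 = a" using sc_one1[OF s a] .
  have gr: "x \<in> {0..1} \<Longrightarrow> 0 \<le> ?g x \<and> ?g x \<le> a" for x using gm[of 0 x] gm[of x 1] g0 g1 by auto
  define h where "h t = \<mu> {x\<in>space M. t \<le> f x}" for t
  have hm: "{x\<in>space M. t \<le> f x} \<in> sets M" for t
  proof -
    have "{t..} \<in> sets borel" by (rule borel_closed) simp
    from measurable_sets[OF fm this] show ?thesis by (simp add: vimage_def Int_def conj_commute)
  qed
  have hr: "h t \<in> {0..1}" for t unfolding h_def using cap_range[OF cap hm] .
  define Ff where "Ff t = S t (h t)" for t
  have Ffr: "t \<in> {0..1} \<Longrightarrow> Ff t \<in> {0..1}" for t unfolding Ff_def using sc_range[OF s _ hr] by auto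
  define I where "I = (SUP t\<in>{0..1}. Ff t)"
  have I_eq: "sugeno S M \<mu> f = I" unfolding I_def sugeno_def Ff_def h_def ..
  have Iup: "t \<in> {0..1} \<Longrightarrow> Ff t \<le> I" for t unfolding I_def by (rule le_sup01[where B=1]) (use Ffr in auto)
  have Ile: "I \<le> 1" unfolding I_def by (rule sup01_le) (use Ffr in auto)
  have I0: "0 \<le> I" using Iup[of 0] Ffr[of 0] by auto
  have I01: "I \<in> {0..1}" using Ile I0 by auto
  define Gs where "Gs s = S s (\<mu> {x\<in>space M. s \<le> ?g (f x)})" for s
  have LS: "\<exists>t1\<in>{0..1}. ?g t1 = s \<and> {x\<in>space M. s \<le> ?g (f x)} = {x\<in>space M. t1 \<le> f x} \<and> (\<forall>x\<in>{0..1}. s \<le> ?g x \<longleftrightarrow> t1 \<le> x)"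
    if sp: "0 < s" "s \<le> a" for s
  proof -
    obtain t1 where t1: "t1 \<in> {0..1}" "?g t1 = s" "\<forall>x\<in>{0..1}. s \<le> ?g x \<longleftrightarrow> t1 \<le> x"
      using lvl[OF cont gm g0, of s] sp g1 by auto
    have "{x\<in>space M. s \<le> ?g (f x)} = {x\<in>space M. t1 \<le> f x}" using t1(3) fr by auto
    then show ?thesis using t1 by auto
  qed
  have Gsr: "Gs s \<in> {0..1}" if s01: "s \<in> {0..1}" for s
  proof -
    have "{x\<in>space M. s \<le> ?g (f x)} \<in> sets M"
    proof (cases "s = 0")
      case True
      have "{x\<in>space M. s \<le> ?g (f x)} = space M" using True gr fr by auto
      then show ?thesis by simp
    next
      case False
      show ?thesis
      proof (cases "s \<le> a")
        case True
        then show ?thesis using LS[of s] False s01 hm by auto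
      next
        case False
        then have "{x\<in>space M. s \<le> ?g (f x)} = {}" using gr fr by force
        then show ?thesis by (metis sets.empty_sets)
      qed
    qed
    then show ?thesis unfolding Gs_def using sc_range[OF s s01 cap_range[OF cap]] by auto
  qed
  define L where "L = (SUP s\<in>{0..1}. Gs s)"
  have L_eq: "sugeno S M \<mu> (\<lambda>x. ?g (f x)) = L" unfolding L_def sugeno_def Gs_def ..
  have Lup: "s \<in> {0..1} \<Longrightarrow> Gs s \<le> L" for s unfolding L_def by (rule le_sup01[where B=1]) (use Gsr in auto)
  have "L \<le> ?g I"
    unfolding L_def
  proof (rule sup01_le)
    fix s :: real assume s01: "s \<in> {0..1}"
    have gI: "0 \<le> ?g I" using gr[OF I01] by auto
    show "Gs s \<le> ?g I"
    proof (cases "s = 0")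
      case True
      have "{x\<in>space M. s \<le> ?g (f x)} = space M" using True gr fr by auto
      then have "Gs s = S 0 (\<mu> (space M))" unfolding Gs_def using True by simp
      also have "\<dots> = 0" using sc_zero1[OF s cap_range[OF cap sets.top]] .
      finally show ?thesis using gI by simp
    next
      case False
      show ?thesis
      proof (cases "s \<le> a")
        case True
        then obtain t1 where t1: "t1 \<in> {0..1}" "?g t1 = s" "{x\<in>space M. s \<le> ?g (f x)} = {x\<in>space M. t1 \<le> f x}"
          using LS[of s] False s01 by auto
        have "Gs s = S (S a t1) (h t1)" unfolding Gs_def h_def using t1 by simp
        also have "\<dots> = ?g (Ff t1)" unfolding Ff_def using assoc a t1(1) hr by auto
        also have "\<dots> \<le> ?g I" using gm[OF Ffr[OF t1(1)] I01 Iup[OF t1(1)]] .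
        finally show ?thesis .
      next
        case False
        then have "{x\<in>space M. s \<le> ?g (f x)} = {}" using gr fr by force
        then have "Gs s = S s (\<mu> {})" by (simp only: Gs_def)
        also have "\<dots> = 0" using cap sc_zero2[OF s s01] unfolding capacity_def by simp
        finally show ?thesis using gI by simp
      qed
    qed
  qed
  moreover have "?g I \<le> L"
  proof -
    have L0: "0 \<le> L" using Lup[of 0] Gsr[of 0] by auto
    have step: "?g (Ff t) \<le> L" if t01: "t \<in> {0..1}" for t
    proof (cases "?g t = 0")
      case True
      have "?g (Ff t) = S (?g t) (h t)" unfolding Ff_def using assoc a t01 hr by auto
      also have "\<dots> = 0" using True sc_zero1[OF s hr] by simp
      finally show ?thesis using L0 by simp
    next
      case False
      then have pos: "0 < ?g t" "?g t \<le> a" using gr[OF t01] by auto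
      then obtain t1 where t1: "t1 \<in> {0..1}" "?g t1 = ?g t" "{x\<in>space M. ?g t \<le> ?g (f x)} = {x\<in>space M. t1 \<le> f x}"
         "\<forall>x\<in>{0..1}. ?g t \<le> ?g x \<longleftrightarrow> t1 \<le> x"
        using LS[of "?g t"] by blast
      have "t1 \<le> t" using t1(4) t01 by auto
      have "?g (Ff t) = S (?g t) (h t)" unfolding Ff_def using assoc a t01 hr by auto
      also have "\<dots> \<le> S (?g t) (h t1)"
      proof -
        have "h t \<le> h t1" unfolding h_def by (rule cap_mono[OF cap hm hm]) (use \<open>t1 \<le> t\<close> in auto)
        then show ?thesis using sc_mono2[OF s _ hr hr] gr[OF t01] a by auto
      qed
      also have "\<dots> = Gs (?g t)" unfolding Gs_def h_def using t1(3) by simp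
      also have "\<dots> \<le> L" using Lup gr[OF t01] a by auto
      finally show ?thesis .
    qed
    show ?thesis
    proof (rule ccontr)
      assume "\<not> ?g I \<le> L"
      then have e: "?g I - L > 0" by auto
      obtain d where d: "d > 0" "\<forall>y\<in>{0..1}. dist y I < d \<longrightarrow> dist (?g y) (?g I) < ?g I - L"
        using cont[unfolded continuous_on_iff] I01 e by blast
      have "\<exists>t\<in>{0..1}. Ff t > I - d"
      proof (rule ccontr)
        assume "\<not> ?thesis"
        then have "\<forall>t\<in>{0..1}. Ff t \<le> I - d" by (simp add: not_less)
        then have "(SUP t\<in>{0..1}. Ff t) \<le> I - d" by (intro sup01_le) auto
        then show False using d unfolding I_def by linarith
      qed
      then obtain t where t: "t \<in> {0..1}" "Ff t > I - d" by auto
      have "dist (Ff t) I < d" unfolding dist_real_def using t(2) Iup[OF t(1)] d(1)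
        by (subst abs_less_iff) linarith
      then have "dist (?g (Ff t)) (?g I) < ?g I - L" using d(2)[rule_format, OF Ffr[OF t(1)]] by simp
      then show False using step[OF t(1)] unfolding dist_real_def by (subst (asm) abs_less_iff) linarith
    qed
  qed
  ultimately show "sugeno S M \<mu> (\<lambda>x. S a (f x)) = S a (sugeno S M \<mu> f)" using L_eq I_eq by simp
qed


theorem theorem2:
  fixes S :: "real \<Rightarrow> real \<Rightarrow> real"
    and T :: "'a itself"
  assumes "semicopula S"
    and "\<forall>a\<in>{0<..<1}. piecewise_const_or_strict (S a)"
  shows "((\<forall>M :: real measure. sugeno_homogeneous_on S M) \<longleftrightarrow>
            ((\<forall>x\<in>{0..1}. \<forall>y\<in>{0..1}. \<forall>z\<in>{0..1}. S (S x y) z = S x (S y z)) \<and>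
             (\<forall>a\<in>{0<..<1}. continuous_on {0..1} (S a))))
       \<and> (((\<forall>x\<in>{0..1}. \<forall>y\<in>{0..1}. \<forall>z\<in>{0..1}. S (S x y) z = S x (S y z)) \<and>
             (\<forall>a\<in>{0<..<1}. continuous_on {0..1} (S a)))
          \<longrightarrow> (\<forall>M :: 'a measure. sugeno_homogeneous_on S M))"
proof (intro conjI impI iffI allI)
  fix M :: "'a measure"
  assume "(\<forall>x\<in>{0..1}. \<forall>y\<in>{0..1}. \<forall>z\<in>{0..1}. S (S x y) z = S x (S y z)) \<and>
             (\<forall>a\<in>{0<..<1}. continuous_on {0..1} (S a))"
  then show "sugeno_homogeneous_on S M" using hom_general[OF assms(1)] by blast
next
  fix M :: "real measure"
  assume "(\<forall>x\<in>{0..1}. \<forall>y\<in>{0..1}. \<forall>z\<in>{0..1}. S (S x y) z = S x (S y z)) \<and>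
             (\<forall>a\<in>{0<..<1}. continuous_on {0..1} (S a))"
  then show "sugeno_homogeneous_on S M" using hom_general[OF assms(1)] by blast
next
  assume h: "\<forall>M :: real measure. sugeno_homogeneous_on S M"
  show "\<forall>x\<in>{0..1}. \<forall>y\<in>{0..1}. \<forall>z\<in>{0..1}. S (S x y) z = S x (S y z)"
    using hom_assoc[OF assms(1) h[rule_format, of "count_space UNIV"]] by blast
  show "\<forall>a\<in>{0<..<1}. continuous_on {0..1} (S a)"
  proof
    fix a :: real assume a: "a \<in> {0<..<1}"
    then have a01: "a \<in> {0..1}" by auto
    show "continuous_on {0..1} (S a)"
    proof (rule mono_cont)
      show "x \<in> {0..1} \<Longrightarrow> y \<in> {0..1} \<Longrightarrow> x \<le> y \<Longrightarrow> S a x \<le> S a y" for x y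
        using sc_mono2[OF assms(1) a01] by blast
      show "S a 0 = 0" using sc_zero2[OF assms(1) a01] .
      show "S a 1 = a" using sc_one1[OF assms(1) a01] .
      show "\<exists>x\<in>{0..1}. S a x = s" if "0 < s" "s \<le> a" for s
        using hom_surj[OF assms(1) h[rule_format, of "count_space {0..1}"] a01] that
          sc_one1[OF assms(1) a01] by auto
    qed
  qed
qed

end
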